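(* Let $\phi$ be a flow of a compact metric space $X$. Suppose that for every $\epsilon>0$ there is $\delta>0$ such that $B[x,\delta\,dist(x,Sing(\phi))]\subset\phi_{[-\epsilon,\epsilon]}(x)$ for every $x\in X$. Then $\phi$ is both singular-expansive and singular-equicontinuous.
   Context: A flow is a continuous $\phi:\mathbb{R}\times X\to X$ with $\phi_0=\mathrm{id}$, $\phi_{t+s}=\phi_t\circ\phi_s$; $\phi_I(x)=\{\phi_t(x):t\in I\}$; $Sing(\phi)$ is the set of fixed points; $dist(z,A)=\inf_{a\in A}d(z,a)$, with $dist(z,\emptyset)=diam(X)$; $B[x,r]=\{y:d(x,y)\le r\}$. $\phi$ is singular-expansive if for every $\epsilon>0$ there is $\delta>0$ such that whenever $x,y\in X$ and an increasing homeomorphism $s:\mathbb{R}\to\mathbb{R}$ satisfy $d(\phi_t(x),\phi_{s(t)}(y))\le\delta\,dist(\phi_t(x),Sing(\phi))$ for all $t$, then $\phi_{s(t_0)}(y)\in\phi_{[t_0-\epsilon,t_0+\epsilon]}(x)$ for some $t_0\in\mathbb{R}$. $\phi$ is singular-equicontinuous if for every $\epsilon>0$ there is $\delta>0$ such that $x,y\in X$ and $d(x,y)\le\delta\,dist(x,Sing(\phi))$ imply $d(\phi_t(x),\phi_t(y))\le\epsilon$ for all $t\in\mathbb{R}$. *)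

theory Defs
  imports "HOL-Analysis.Analysis"
begin

definition is_flow :: "'a::metric_space set \<Rightarrow> (real \<Rightarrow> 'a \<Rightarrow> 'a) \<Rightarrow> bool" where
  "is_flow X phi \<longleftrightarrow>
     continuous_on (UNIV \<times> X) (\<lambda>(t, x). phi t x) \<and>
     (\<forall>t. \<forall>x\<in>X. phi t x \<in> X) \<and>
     (\<forall>x\<in>X. phi 0 x = x) \<and>
     (\<forall>t s. \<forall>x\<in>X. phi (t + s) x = phi t (phi s x))"

definition Sing :: "'a set \<Rightarrow> (real \<Rightarrow> 'a \<Rightarrow> 'a) \<Rightarrow> 'a set" where
  "Sing X phi = {x \<in> X. \<forall>t. phi t x = x}"

text \<open>dist(z,A), with the convention dist(z,{}) = diam X.\<close>
definition sdist :: "'a::metric_space set \<Rightarrow> 'a set \<Rightarrow> 'a \<Rightarrow> real" where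
  "sdist X A z = (if A = {} then diameter X else infdist z A)"

definition orbit_seg :: "(real \<Rightarrow> 'a \<Rightarrow> 'a) \<Rightarrow> real set \<Rightarrow> 'a \<Rightarrow> 'a set" where
  "orbit_seg phi I x = (\<lambda>t. phi t x) ` I"

definition singular_expansive :: "'a::metric_space set \<Rightarrow> (real \<Rightarrow> 'a \<Rightarrow> 'a) \<Rightarrow> bool" where
  "singular_expansive X phi \<longleftrightarrow>
     (\<forall>\<epsilon>>0. \<exists>\<delta>>0. \<forall>x\<in>X. \<forall>y\<in>X. \<forall>s :: real \<Rightarrow> real.
        (strict_mono s \<and> (\<exists>g. homeomorphism UNIV UNIV s g) \<and>
         (\<forall>t. dist (phi t x) (phi (s t) y) \<le> \<delta> * sdist X (Sing X phi) (phi t x)))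
        \<longrightarrow> (\<exists>t0. phi (s t0) y \<in> orbit_seg phi {t0 - \<epsilon> .. t0 + \<epsilon>} x))"

definition singular_equicontinuous :: "'a::metric_space set \<Rightarrow> (real \<Rightarrow> 'a \<Rightarrow> 'a) \<Rightarrow> bool" where
  "singular_equicontinuous X phi \<longleftrightarrow>
     (\<forall>\<epsilon>>0. \<exists>\<delta>>0. \<forall>x\<in>X. \<forall>y\<in>X.
        dist x y \<le> \<delta> * sdist X (Sing X phi) x \<longrightarrow> (\<forall>t. dist (phi t x) (phi t y) \<le> \<epsilon>))"

end

theory Submission
  imports Defs
begin

lemma small_time:
  fixes X :: "'a::metric_space set" and phi :: "real \<Rightarrow> 'a \<Rightarrow> 'a"
  assumes "compact X" "is_flow X phi" "e > 0"
  shows "\<exists>\<eta>>0. \<forall>r z. \<bar>r\<bar> \<le> \<eta> \<longrightarrow> z \<in> X \<longrightarrow> dist (phi r z) z < e"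
proof -
  let ?S = "{-1..1::real} \<times> X"
  have c: "continuous_on ?S (\<lambda>(t, x). phi t x)"
    using assms(2) unfolding is_flow_def by (meson continuous_on_subset subset_UNIV Sigma_mono order_refl)
  have "compact ?S" using assms(1) by (simp add: compact_Times)
  then have "uniformly_continuous_on ?S (\<lambda>(t, x). phi t x)"
    using c compact_uniformly_continuous by blast
  then obtain d where d: "d > 0" and
    H: "\<forall>p\<in>?S. \<forall>q\<in>?S. dist q p < d \<longrightarrow> dist ((\<lambda>(t, x). phi t x) q) ((\<lambda>(t, x). phi t x) p) < e"
    using assms(3) unfolding uniformly_continuous_on_def by blast
  show ?thesis
  proof (intro exI[of _ "min (d/2) 1"] conjI allI impI)
    show "min (d/2) 1 > 0" using d by simp
    fix r z assume r: "\<bar>r\<bar> \<le> min (d/2) 1" and z: "z \<in> X"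
    have "dist (r, z) (0, z) = \<bar>r\<bar>" by (simp add: dist_Pair_Pair dist_real_def)
    then have "dist (r, z) (0, z) < d" using r d by simp
    moreover have "(r, z) \<in> ?S" "(0::real, z) \<in> ?S" using r z by auto
    ultimately have "dist (phi r z) (phi 0 z) < e" using H by fastforce
    moreover have "phi 0 z = z" using assms(2) z unfolding is_flow_def by blast
    ultimately show "dist (phi r z) z < e" by simp
  qed
qed

theorem mainTheorem17:
  fixes X :: "'a::metric_space set" and phi :: "real \<Rightarrow> 'a \<Rightarrow> 'a"
  assumes "compact X"
    and "is_flow X phi"
    and "\<forall>\<epsilon>>0. \<exists>\<delta>>0. \<forall>x\<in>X.
           cball x (\<delta> * sdist X (Sing X phi) x) \<inter> X \<subseteq> orbit_seg phi {-\<epsilon> .. \<epsilon>} x"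
  shows "singular_expansive X phi \<and> singular_equicontinuous X phi"
proof
  have inv: "\<And>t x. x \<in> X \<Longrightarrow> phi t x \<in> X" using assms(2) unfolding is_flow_def by blast
  have add: "\<And>t s x. x \<in> X \<Longrightarrow> phi (t + s) x = phi t (phi s x)"
    using assms(2) unfolding is_flow_def by blast
  show "singular_expansive X phi"
    unfolding singular_expansive_def
  proof (intro allI impI)
    fix \<epsilon> :: real assume e: "\<epsilon> > 0"
    then obtain \<delta> where d: "\<delta> > 0" and
      H: "\<forall>x\<in>X. cball x (\<delta> * sdist X (Sing X phi) x) \<inter> X \<subseteq> orbit_seg phi {-\<epsilon> .. \<epsilon>} x"
      using assms(3) by blast
    show "\<exists>\<delta>>0. \<forall>x\<in>X. \<forall>y\<in>X. \<forall>s :: real \<Rightarrow> real.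
        (strict_mono s \<and> (\<exists>g. homeomorphism UNIV UNIV s g) \<and>
         (\<forall>t. dist (phi t x) (phi (s t) y) \<le> \<delta> * sdist X (Sing X phi) (phi t x)))
        \<longrightarrow> (\<exists>t0. phi (s t0) y \<in> orbit_seg phi {t0 - \<epsilon> .. t0 + \<epsilon>} x)"
    proof (rule exI[of _ \<delta>], intro conjI d ballI allI impI)
      fix x y and s :: "real \<Rightarrow> real" assume x: "x \<in> X" and y: "y \<in> X" and
        A: "strict_mono s \<and> (\<exists>g. homeomorphism UNIV UNIV s g) \<and>
         (\<forall>t. dist (phi t x) (phi (s t) y) \<le> \<delta> * sdist X (Sing X phi) (phi t x))"
      have px: "phi 0 x = x" using assms(2) x unfolding is_flow_def by blast
      have "dist x (phi (s 0) y) \<le> \<delta> * sdist X (Sing X phi) x" using A px by metis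
      then have "phi (s 0) y \<in> cball x (\<delta> * sdist X (Sing X phi) x) \<inter> X"
        using inv y by auto
      then have "phi (s 0) y \<in> orbit_seg phi {-\<epsilon> .. \<epsilon>} x" using H x by blast
      then have "phi (s 0) y \<in> orbit_seg phi {0 - \<epsilon> .. 0 + \<epsilon>} x" by simp
      then show "\<exists>t0. phi (s t0) y \<in> orbit_seg phi {t0 - \<epsilon> .. t0 + \<epsilon>} x"
        by blast
    qed
  qed
  show "singular_equicontinuous X phi"
    unfolding singular_equicontinuous_def
  proof (intro allI impI)
    fix \<epsilon> :: real assume e: "\<epsilon> > 0"
    obtain \<eta> where eta: "\<eta> > 0" and
      E: "\<forall>r z. \<bar>r\<bar> \<le> \<eta> \<longrightarrow> z \<in> X \<longrightarrow> dist (phi r z) z < \<epsilon>"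
      using small_time[OF assms(1,2) e] by blast
    obtain \<delta> where d: "\<delta> > 0" and
      H: "\<forall>x\<in>X. cball x (\<delta> * sdist X (Sing X phi) x) \<inter> X \<subseteq> orbit_seg phi {-\<eta> .. \<eta>} x"
      using assms(3) eta by blast
    show "\<exists>\<delta>>0. \<forall>x\<in>X. \<forall>y\<in>X.
        dist x y \<le> \<delta> * sdist X (Sing X phi) x \<longrightarrow> (\<forall>t. dist (phi t x) (phi t y) \<le> \<epsilon>)"
    proof (rule exI[of _ \<delta>], intro conjI d ballI allI impI)
      fix x y t assume x: "x \<in> X" and y: "y \<in> X" and
        D: "dist x y \<le> \<delta> * sdist X (Sing X phi) x"
      have "y \<in> cball x (\<delta> * sdist X (Sing X phi) x) \<inter> X" using y D by simp
      then have "y \<in> orbit_seg phi {-\<eta> .. \<eta>} x" using H x by blast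
      then obtain r where r: "\<bar>r\<bar> \<le> \<eta>" and yr: "y = phi r x"
        unfolding orbit_seg_def by (metis (no_types, lifting) atLeastAtMost_iff abs_le_iff imageE minus_le_iff)
      have "phi t y = phi r (phi t x)"
        using add[OF x, of t r] add[OF x, of r t] yr by (simp add: add.commute)
      then have "dist (phi t y) (phi t x) < \<epsilon>" using E r inv[OF x] by simp
      then show "dist (phi t x) (phi t y) \<le> \<epsilon>" by (simp add: dist_commute)
    qed
  qed
qed

end
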